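(* Let $P:\mathcal C^{op}\to\mathbf{Pos}$ and $Q:\mathcal D^{op}\to\mathbf{Pos}$ be doctrines and $(L,\lambda)\dashv(R,\rho)$ an adjunction in $\mathbf{IdxPos}$ with unit $\eta$ and counit $\epsilon$. Let $\square$ be the interior operator on $QL^{op}$ with $\square_X=\lambda_X\circ P(\eta_X)\circ\rho_{LX}$, let $\square QL^{op}:\mathcal C^{op}\to\mathbf{Pos}$ be the doctrine of its fixed points, $\square QL^{op}(X)=\{\alpha\in Q(LX)\mid\square_X\alpha=\alpha\}$, with inclusion $\iota:\square QL^{op}\Rightarrow QL^{op}$, and let $\rho'=(P\eta^{op})\cdot(\rho L^{op})$, with components $\rho'_X=P(\eta_X)\circ\rho_{LX}:Q(LX)\to PX$. Then the following diagram of adjunctions in $\mathbf{IdxPos}$ commutes: $(\mathrm{Id}_{\mathcal C},\lambda)\dashv(\mathrm{Id}_{\mathcal C},\rho')$ between $P$ and $\square QL^{op}$ (with $\lambda$ corestricted to $\square QL^{op}$ and $\rho'$ restricted to it) and between $P$ and $QL^{op}$; $(\mathrm{Id}_{\mathcal C},\iota)\dashv(\mathrm{Id}_{\mathcal C},\square)$ between $\square QL^{op}$ and $QL^{op}$; $(L,\iota)\dashv(R,\square\cdot(Q\epsilon^{op}))$ between $\square QL^{op}$ and $Q$ (right adjoint components $\square_{RY}\circ Q(\epsilon_Y)$); and $(L,\mathrm{id})\dashv(R,Q\epsilon^{op})$ between $QL^{op}$ and $Q$; that is, the composites of these left adjoints (respectively right adjoints) along the paths $P\to\square QL^{op}\to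 Q$, $P\to QL^{op}\to Q$, $P\to\square QL^{op}\to QL^{op}$ and $\square QL^{op}\to QL^{op}\to Q$ agree wherever they have the same source and target. Moreover, the natural transformation $\lambda:P\Rightarrow\square QL^{op}$ is componentwise surjective and $\rho':\square QL^{op}\Rightarrow P$ is componentwise injective.
   Context: A doctrine is a functor $P:\mathcal C^{op}\to\mathbf{Pos}$; for $t:X\to Y$, $P(t):PY\to PX$ is reindexing. In the 2-category $\mathbf{IdxPos}$, a 1-arrow $(F,f):P\to Q$ (with $P:\mathcal C^{op}\to\mathbf{Pos}$, $Q:\mathcal D^{op}\to\mathbf{Pos}$) is a functor $F:\mathcal C\to\mathcal D$ with a natural transformation $f:P\Rightarrow Q\circ F^{op}$; a 2-arrow $\theta:(F,f)\Rightarrow(F',f')$ is a natural transformation $\theta:F\Rightarrow F'$ with $f_X(\alpha)\le Q(\theta_X)(f'_X(\alpha))$ for all $X,\alpha$; composition of $(G,g)$ then $(F,f)$ is $(FG,(fG^{op})\cdot g)$ (components $f_{GX}\circ g_X$). An adjunction $(L,\lambda)\dashv(R,\rho)$ in $\mathbf{IdxPos}$ amounts to: $L\dashv R$ adjunction of categories with unit $\eta:\mathrm{Id}_{\mathcal C}\Rightarrow RL$ and counit $\epsilon:LR\Rightarrow\mathrm{Id}_{\mathcal D}$; natural $\lambda:P\Rightarrow QL^{op}$, $\rho:Q\Rightarrow PR^{op}$ with $\alpha\le P(\eta_X)(\rho_{LX}\lambda_X\alpha)$ and $\lambda_{RY}(\rho_Y\beta)\le Q(\epsilon_Y)(\beta)$.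 In the diagram, adjunctions whose functors are identities have identity unit and counit, and the adjunctions between $\square QL^{op}$ or $QL^{op}$ and $Q$ have unit $\eta$ and counit $\epsilon$. An interior operator on a doctrine $M$ is a natural $\square:M\Rightarrow M$ with $\square_X\alpha\le\alpha$, $\square_X\alpha\le\square_X\square_X\alpha$. *)

theory Defs
  imports Main
begin

record ('o,'a) cat =
  Obj :: "'o set"
  Arr :: "'a set"
  Dom :: "'a \<Rightarrow> 'o"
  Cod :: "'a \<Rightarrow> 'o"
  Idm :: "'o \<Rightarrow> 'a"
  Cmp :: "'a \<Rightarrow> 'a \<Rightarrow> 'a"  (* Cmp C g f = g o f *)

definition hom :: "('o,'a,'m) cat_scheme \<Rightarrow> 'o \<Rightarrow> 'o \<Rightarrow> 'a set" where
  "hom C X Y = {f \<in> Arr C. Dom C f = X \<and> Cod C f = Y}"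

definition category :: "('o,'a) cat \<Rightarrow> bool" where
  "category C \<longleftrightarrow>
     (\<forall>f\<in>Arr C. Dom C f \<in> Obj C \<and> Cod C f \<in> Obj C) \<and>
     (\<forall>X\<in>Obj C. Idm C X \<in> hom C X X) \<and>
     (\<forall>f\<in>Arr C. \<forall>g\<in>Arr C. Cod C f = Dom C g \<longrightarrow>
         Cmp C g f \<in> hom C (Dom C f) (Cod C g)) \<and>
     (\<forall>f\<in>Arr C. Cmp C (Idm C (Cod C f)) f = f \<and> Cmp C f (Idm C (Dom C f)) = f) \<and>
     (\<forall>f\<in>Arr C. \<forall>g\<in>Arr C. \<forall>h\<in>Arr C. Cod C f = Dom C g \<longrightarrow> Cod C g = Dom C h \<longrightarrow>
         Cmp C h (Cmp C g f) = Cmp C (Cmp C h g) f)"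

definition "functor" :: "('o1,'a1) cat \<Rightarrow> ('o2,'a2) cat \<Rightarrow> ('o1 \<Rightarrow> 'o2) \<Rightarrow> ('a1 \<Rightarrow> 'a2) \<Rightarrow> bool" where
  "functor C D Fo Fa \<longleftrightarrow>
     (\<forall>X\<in>Obj C. Fo X \<in> Obj D) \<and>
     (\<forall>f\<in>Arr C. Fa f \<in> hom D (Fo (Dom C f)) (Fo (Cod C f))) \<and>
     (\<forall>X\<in>Obj C. Fa (Idm C X) = Idm D (Fo X)) \<and>
     (\<forall>f\<in>Arr C. \<forall>g\<in>Arr C. Cod C f = Dom C g \<longrightarrow> Fa (Cmp C g f) = Cmp D (Fa g) (Fa f))"

definition cat_adj :: "('o1,'a1) cat \<Rightarrow> ('o2,'a2) cat \<Rightarrow> ('o1 \<Rightarrow> 'o2) \<Rightarrow> ('a1 \<Rightarrow> 'a2)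
    \<Rightarrow> ('o2 \<Rightarrow> 'o1) \<Rightarrow> ('a2 \<Rightarrow> 'a1) \<Rightarrow> ('o1 \<Rightarrow> 'a1) \<Rightarrow> ('o2 \<Rightarrow> 'a2) \<Rightarrow> bool" where
  "cat_adj C D Lo La Ro Ra eta eps \<longleftrightarrow>
     functor C D Lo La \<and> functor D C Ro Ra \<and>
     (\<forall>X\<in>Obj C. eta X \<in> hom C X (Ro (Lo X))) \<and>
     (\<forall>t\<in>Arr C. Cmp C (Ra (La t)) (eta (Dom C t)) = Cmp C (eta (Cod C t)) t) \<and>
     (\<forall>Y\<in>Obj D. eps Y \<in> hom D (Lo (Ro Y)) Y) \<and>
     (\<forall>s\<in>Arr D. Cmp D (eps (Cod D s)) (La (Ra s)) = Cmp D s (eps (Dom D s))) \<and>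
     (\<forall>X\<in>Obj C. Cmp D (eps (Lo X)) (La (eta X)) = Idm D (Lo X)) \<and>
     (\<forall>Y\<in>Obj D. Cmp C (Ra (eps Y)) (eta (Ro Y)) = Idm C (Ro Y))"

record ('o,'a,'e) doctrine =
  Car :: "'o \<Rightarrow> 'e set"
  Le  :: "'o \<Rightarrow> 'e \<Rightarrow> 'e \<Rightarrow> bool"
  Rx  :: "'a \<Rightarrow> 'e \<Rightarrow> 'e"   (* reindexing P(t) : P(Cod t) \<rightarrow> P(Dom t) *)

definition is_doctrine :: "('o,'a) cat \<Rightarrow> ('o,'a,'e) doctrine \<Rightarrow> bool" where
  "is_doctrine C P \<longleftrightarrow>
     (\<forall>X\<in>Obj C. (\<forall>a\<in>Car P X. Le P X a a) \<and>
        (\<forall>a\<in>Car P X. \<forall>b\<in>Car P X. Le P X a b \<longrightarrow> Le P X b a \<longrightarrow> a = b) \<and>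
        (\<forall>a\<in>Car P X. \<forall>b\<in>Car P X. \<forall>c\<in>Car P X. Le P X a b \<longrightarrow> Le P X b c \<longrightarrow> Le P X a c)) \<and>
     (\<forall>t\<in>Arr C. \<forall>a\<in>Car P (Cod C t). Rx P t a \<in> Car P (Dom C t)) \<and>
     (\<forall>t\<in>Arr C. \<forall>a\<in>Car P (Cod C t). \<forall>b\<in>Car P (Cod C t).
         Le P (Cod C t) a b \<longrightarrow> Le P (Dom C t) (Rx P t a) (Rx P t b)) \<and>
     (\<forall>X\<in>Obj C. \<forall>a\<in>Car P X. Rx P (Idm C X) a = a) \<and>
     (\<forall>f\<in>Arr C. \<forall>g\<in>Arr C. Cod C f = Dom C g \<longrightarrow>
         (\<forall>a\<in>Car P (Cod C g). Rx P (Cmp C g f) a = Rx P f (Rx P g a)))"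

definition reidx :: "('o2,'a2,'e) doctrine \<Rightarrow> ('o1 \<Rightarrow> 'o2) \<Rightarrow> ('a1 \<Rightarrow> 'a2) \<Rightarrow> ('o1,'a1,'e) doctrine" where
  "reidx Q Fo Fa = \<lparr>Car = (\<lambda>X. Car Q (Fo X)), Le = (\<lambda>X. Le Q (Fo X)), Rx = (\<lambda>t. Rx Q (Fa t))\<rparr>"

definition dnat :: "('o,'a) cat \<Rightarrow> ('o,'a,'e1) doctrine \<Rightarrow> ('o,'a,'e2) doctrine \<Rightarrow> ('o \<Rightarrow> 'e1 \<Rightarrow> 'e2) \<Rightarrow> bool" where
  "dnat C P Q f \<longleftrightarrow>
     (\<forall>X\<in>Obj C. \<forall>a\<in>Car P X. f X a \<in> Car Q X) \<and>
     (\<forall>X\<in>Obj C. \<forall>a\<in>Car P X. \<forall>b\<in>Car P X. Le P X a b \<longrightarrow> Le Q X (f X a) (f X b)) \<and>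
     (\<forall>t\<in>Arr C. \<forall>b\<in>Car P (Cod C t). f (Dom C t) (Rx P t b) = Rx Q t (f (Cod C t) b))"

definition idx_adj :: "('o1,'a1) cat \<Rightarrow> ('o2,'a2) cat \<Rightarrow> ('o1,'a1,'e1) doctrine \<Rightarrow> ('o2,'a2,'e2) doctrine
    \<Rightarrow> ('o1 \<Rightarrow> 'o2) \<Rightarrow> ('a1 \<Rightarrow> 'a2) \<Rightarrow> ('o1 \<Rightarrow> 'e1 \<Rightarrow> 'e2)
    \<Rightarrow> ('o2 \<Rightarrow> 'o1) \<Rightarrow> ('a2 \<Rightarrow> 'a1) \<Rightarrow> ('o2 \<Rightarrow> 'e2 \<Rightarrow> 'e1)
    \<Rightarrow> ('o1 \<Rightarrow> 'a1) \<Rightarrow> ('o2 \<Rightarrow> 'a2) \<Rightarrow> bool" where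
  "idx_adj C D P Q Lo La l Ro Ra r eta eps \<longleftrightarrow>
     cat_adj C D Lo La Ro Ra eta eps \<and> is_doctrine C P \<and> is_doctrine D Q \<and>
     dnat C P (reidx Q Lo La) l \<and> dnat D Q (reidx P Ro Ra) r \<and>
     (\<forall>X\<in>Obj C. \<forall>a\<in>Car P X. Le P X a (Rx P (eta X) (r (Lo X) (l X a)))) \<and>
     (\<forall>Y\<in>Obj D. \<forall>b\<in>Car Q Y. Le Q (Lo (Ro Y)) (l (Ro Y) (r Y b)) (Rx Q (eps Y) b))"

definition comp1 :: "('o2 \<Rightarrow> 'o3) \<Rightarrow> ('a2 \<Rightarrow> 'a3) \<Rightarrow> ('o2 \<Rightarrow> 'e2 \<Rightarrow> 'e3)
    \<Rightarrow> ('o1 \<Rightarrow> 'o2) \<Rightarrow> ('a1 \<Rightarrow> 'a2) \<Rightarrow> ('o1 \<Rightarrow> 'e1 \<Rightarrow> 'e2)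
    \<Rightarrow> ('o1 \<Rightarrow> 'o3) \<times> ('a1 \<Rightarrow> 'a3) \<times> ('o1 \<Rightarrow> 'e1 \<Rightarrow> 'e3)" where
  "comp1 Fo Fa f Go Ga g = (Fo \<circ> Go, Fa \<circ> Ga, (\<lambda>X a. f (Go X) (g X a)))"

definition arr_eq :: "('o1,'a1) cat \<Rightarrow> ('o1,'a1,'e1) doctrine
    \<Rightarrow> ('o1 \<Rightarrow> 'o2) \<times> ('a1 \<Rightarrow> 'a2) \<times> ('o1 \<Rightarrow> 'e1 \<Rightarrow> 'e2)
    \<Rightarrow> ('o1 \<Rightarrow> 'o2) \<times> ('a1 \<Rightarrow> 'a2) \<times> ('o1 \<Rightarrow> 'e1 \<Rightarrow> 'e2) \<Rightarrow> bool" where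
  "arr_eq C P F G \<longleftrightarrow>
     (\<forall>X\<in>Obj C. fst F X = fst G X) \<and>
     (\<forall>t\<in>Arr C. fst (snd F) t = fst (snd G) t) \<and>
     (\<forall>X\<in>Obj C. \<forall>a\<in>Car P X. snd (snd F) X a = snd (snd G) X a)"

definition fixdoc :: "('o2,'a2,'e) doctrine \<Rightarrow> ('o1 \<Rightarrow> 'o2) \<Rightarrow> ('a1 \<Rightarrow> 'a2) \<Rightarrow> ('o1 \<Rightarrow> 'e \<Rightarrow> 'e)
    \<Rightarrow> ('o1,'a1,'e) doctrine" where
  "fixdoc Q Lo La bx = \<lparr>Car = (\<lambda>X. {a \<in> Car Q (Lo X). bx X a = a}),
                        Le = (\<lambda>X. Le Q (Lo X)), Rx = (\<lambda>t. Rx Q (La t))\<rparr>"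

end

theory Submission imports Defs begin

locale adjs =
  fixes C :: "('o1,'a1) cat" and D :: "('o2,'a2) cat"
    and P :: "('o1,'a1,'e1) doctrine" and Q :: "('o2,'a2,'e2) doctrine"
    and Lo :: "'o1 \<Rightarrow> 'o2" and La :: "'a1 \<Rightarrow> 'a2" and lam :: "'o1 \<Rightarrow> 'e1 \<Rightarrow> 'e2"
    and Ro :: "'o2 \<Rightarrow> 'o1" and Ra :: "'a2 \<Rightarrow> 'a1" and rho :: "'o2 \<Rightarrow> 'e2 \<Rightarrow> 'e1"
    and eta :: "'o1 \<Rightarrow> 'a1" and eps :: "'o2 \<Rightarrow> 'a2"
  assumes catC: "category C" and catD: "category D"
    and adj: "idx_adj C D P Q Lo La lam Ro Ra rho eta eps"
begin

definition "rp X a = Rx P (eta X) (rho (Lo X) a)"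
definition "bx X a = lam X (rp X a)"

lemma cadj: "cat_adj C D Lo La Ro Ra eta eps" using adj unfolding idx_adj_def by blast
lemma FL: "functor C D Lo La" using cadj unfolding cat_adj_def by blast
lemma FR: "functor D C Ro Ra" using cadj unfolding cat_adj_def by blast
lemma dP: "is_doctrine C P" using adj unfolding idx_adj_def by blast
lemma dQ: "is_doctrine D Q" using adj unfolding idx_adj_def by blast

lemma LObj: "X \<in> Obj C \<Longrightarrow> Lo X \<in> Obj D" using FL unfolding functor_def by blast
lemma RObj: "Y \<in> Obj D \<Longrightarrow> Ro Y \<in> Obj C" using FR unfolding functor_def by blast
lemma LArr: "t \<in> Arr C \<Longrightarrow> La t \<in> Arr D \<and> Dom D (La t) = Lo (Dom C t) \<and> Cod D (La t) = Lo (Cod C t)"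
  using FL unfolding functor_def hom_def by blast
lemma RArr: "s \<in> Arr D \<Longrightarrow> Ra s \<in> Arr C \<and> Dom C (Ra s) = Ro (Dom D s) \<and> Cod C (Ra s) = Ro (Cod D s)"
  using FR unfolding functor_def hom_def by blast
lemma LId: "X \<in> Obj C \<Longrightarrow> La (Idm C X) = Idm D (Lo X)" using FL unfolding functor_def by blast
lemma LCmp: "f \<in> Arr C \<Longrightarrow> g \<in> Arr C \<Longrightarrow> Cod C f = Dom C g \<Longrightarrow> La (Cmp C g f) = Cmp D (La g) (La f)"
  using FL unfolding functor_def by blast
lemma etaA: "X \<in> Obj C \<Longrightarrow> eta X \<in> Arr C \<and> Dom C (eta X) = X \<and> Cod C (eta X) = Ro (Lo X)"
  using cadj unfolding cat_adj_def hom_def by blast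
lemma epsA: "Y \<in> Obj D \<Longrightarrow> eps Y \<in> Arr D \<and> Dom D (eps Y) = Lo (Ro Y) \<and> Cod D (eps Y) = Y"
  using cadj unfolding cat_adj_def hom_def by blast
lemma etaN: "t \<in> Arr C \<Longrightarrow> Cmp C (Ra (La t)) (eta (Dom C t)) = Cmp C (eta (Cod C t)) t"
  using cadj unfolding cat_adj_def by blast
lemma epsN: "s \<in> Arr D \<Longrightarrow> Cmp D (eps (Cod D s)) (La (Ra s)) = Cmp D s (eps (Dom D s))"
  using cadj unfolding cat_adj_def by blast
lemma tri1: "X \<in> Obj C \<Longrightarrow> Cmp D (eps (Lo X)) (La (eta X)) = Idm D (Lo X)"
  using cadj unfolding cat_adj_def by blast

lemma IdC: "X \<in> Obj C \<Longrightarrow> Idm C X \<in> Arr C \<and> Dom C (Idm C X) = X \<and> Cod C (Idm C X) = X"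
  using catC unfolding category_def hom_def by blast
lemma IdD: "Y \<in> Obj D \<Longrightarrow> Idm D Y \<in> Arr D \<and> Dom D (Idm D Y) = Y \<and> Cod D (Idm D Y) = Y"
  using catD unfolding category_def hom_def by blast
lemma DomC: "t \<in> Arr C \<Longrightarrow> Dom C t \<in> Obj C \<and> Cod C t \<in> Obj C"
  using catC unfolding category_def by blast
lemma DomD: "t \<in> Arr D \<Longrightarrow> Dom D t \<in> Obj D \<and> Cod D t \<in> Obj D"
  using catD unfolding category_def by blast
lemma CidC: "f \<in> Arr C \<Longrightarrow> Cmp C (Idm C (Cod C f)) f = f \<and> Cmp C f (Idm C (Dom C f)) = f"
  using catC unfolding category_def by blast
lemma CidD: "f \<in> Arr D \<Longrightarrow> Cmp D (Idm D (Cod D f)) f = f \<and> Cmp D f (Idm D (Dom D f)) = f"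
  using catD unfolding category_def by blast

lemmas Pd = dP[unfolded is_doctrine_def]
lemmas P1 = Pd[THEN conjunct1] and P2 = Pd[THEN conjunct2, THEN conjunct1]
  and P3 = Pd[THEN conjunct2, THEN conjunct2, THEN conjunct1]
  and P4 = Pd[THEN conjunct2, THEN conjunct2, THEN conjunct2, THEN conjunct1]
  and P5 = Pd[THEN conjunct2, THEN conjunct2, THEN conjunct2, THEN conjunct2]
lemmas Qd = dQ[unfolded is_doctrine_def]
lemmas Q1 = Qd[THEN conjunct1] and Q2 = Qd[THEN conjunct2, THEN conjunct1]
  and Q3 = Qd[THEN conjunct2, THEN conjunct2, THEN conjunct1]
  and Q4 = Qd[THEN conjunct2, THEN conjunct2, THEN conjunct2, THEN conjunct1]
  and Q5 = Qd[THEN conjunct2, THEN conjunct2, THEN conjunct2, THEN conjunct2]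
lemmas Ad = adj[unfolded idx_adj_def]
lemmas dl = Ad[THEN conjunct2, THEN conjunct2, THEN conjunct2, THEN conjunct1, unfolded dnat_def reidx_def doctrine.simps]
lemmas dr = Ad[THEN conjunct2, THEN conjunct2, THEN conjunct2, THEN conjunct2, THEN conjunct1, unfolded dnat_def reidx_def doctrine.simps]
lemmas un = Ad[THEN conjunct2, THEN conjunct2, THEN conjunct2, THEN conjunct2, THEN conjunct2, THEN conjunct1]
lemmas cu = Ad[THEN conjunct2, THEN conjunct2, THEN conjunct2, THEN conjunct2, THEN conjunct2, THEN conjunct2]

lemma Prefl: "X \<in> Obj C \<Longrightarrow> a \<in> Car P X \<Longrightarrow> Le P X a a" using P1 by blast
lemma Pantis: "X \<in> Obj C \<Longrightarrow> a \<in> Car P X \<Longrightarrow> b \<in> Car P X \<Longrightarrow> Le P X a b \<Longrightarrow> Le P X b a \<Longrightarrow> a = b"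
  using P1 by blast
lemma Ptrans: "X \<in> Obj C \<Longrightarrow> a \<in> Car P X \<Longrightarrow> b \<in> Car P X \<Longrightarrow> c \<in> Car P X \<Longrightarrow> Le P X a b \<Longrightarrow> Le P X b c \<Longrightarrow> Le P X a c"
  using P1 by blast
lemma PRx: "t \<in> Arr C \<Longrightarrow> a \<in> Car P (Cod C t) \<Longrightarrow> Rx P t a \<in> Car P (Dom C t)"
  using P2 by blast
lemma PRxm: "t \<in> Arr C \<Longrightarrow> a \<in> Car P (Cod C t) \<Longrightarrow> b \<in> Car P (Cod C t) \<Longrightarrow> Le P (Cod C t) a b \<Longrightarrow> Le P (Dom C t) (Rx P t a) (Rx P t b)"
  using P3 by blast
lemma PId: "X \<in> Obj C \<Longrightarrow> a \<in> Car P X \<Longrightarrow> Rx P (Idm C X) a = a"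
  using P4 by blast
lemma PCmp: "f \<in> Arr C \<Longrightarrow> g \<in> Arr C \<Longrightarrow> Cod C f = Dom C g \<Longrightarrow> a \<in> Car P (Cod C g) \<Longrightarrow> Rx P (Cmp C g f) a = Rx P f (Rx P g a)"
  using P5 by blast

lemma Qrefl: "X \<in> Obj D \<Longrightarrow> a \<in> Car Q X \<Longrightarrow> Le Q X a a" using Q1 by blast
lemma Qantis: "X \<in> Obj D \<Longrightarrow> a \<in> Car Q X \<Longrightarrow> b \<in> Car Q X \<Longrightarrow> Le Q X a b \<Longrightarrow> Le Q X b a \<Longrightarrow> a = b"
  using Q1 by blast
lemma Qtrans: "X \<in> Obj D \<Longrightarrow> a \<in> Car Q X \<Longrightarrow> b \<in> Car Q X \<Longrightarrow> c \<in> Car Q X \<Longrightarrow> Le Q X a b \<Longrightarrow> Le Q X b c \<Longrightarrow> Le Q X a c"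
  using Q1 by blast
lemma QRx: "t \<in> Arr D \<Longrightarrow> a \<in> Car Q (Cod D t) \<Longrightarrow> Rx Q t a \<in> Car Q (Dom D t)"
  using Q2 by blast
lemma QRxm: "t \<in> Arr D \<Longrightarrow> a \<in> Car Q (Cod D t) \<Longrightarrow> b \<in> Car Q (Cod D t) \<Longrightarrow> Le Q (Cod D t) a b \<Longrightarrow> Le Q (Dom D t) (Rx Q t a) (Rx Q t b)"
  using Q3 by blast
lemma QId: "X \<in> Obj D \<Longrightarrow> a \<in> Car Q X \<Longrightarrow> Rx Q (Idm D X) a = a"
  using Q4 by blast
lemma QCmp: "f \<in> Arr D \<Longrightarrow> g \<in> Arr D \<Longrightarrow> Cod D f = Dom D g \<Longrightarrow> a \<in> Car Q (Cod D g) \<Longrightarrow> Rx Q (Cmp D g f) a = Rx Q f (Rx Q g a)"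
  using Q5 by blast

lemma lamC: "X \<in> Obj C \<Longrightarrow> a \<in> Car P X \<Longrightarrow> lam X a \<in> Car Q (Lo X)"
  using dl by blast
lemma lamM: "X \<in> Obj C \<Longrightarrow> a \<in> Car P X \<Longrightarrow> b \<in> Car P X \<Longrightarrow> Le P X a b \<Longrightarrow> Le Q (Lo X) (lam X a) (lam X b)"
  using dl by blast
lemma lamN: "t \<in> Arr C \<Longrightarrow> b \<in> Car P (Cod C t) \<Longrightarrow> lam (Dom C t) (Rx P t b) = Rx Q (La t) (lam (Cod C t) b)"
  using dl by blast
lemma rhoC: "Y \<in> Obj D \<Longrightarrow> a \<in> Car Q Y \<Longrightarrow> rho Y a \<in> Car P (Ro Y)"
  using dr by blast
lemma rhoM: "Y \<in> Obj D \<Longrightarrow> a \<in> Car Q Y \<Longrightarrow> b \<in> Car Q Y \<Longrightarrow> Le Q Y a b \<Longrightarrow> Le P (Ro Y) (rho Y a) (rho Y b)"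
  using dr by blast
lemma rhoN: "t \<in> Arr D \<Longrightarrow> b \<in> Car Q (Cod D t) \<Longrightarrow> rho (Dom D t) (Rx Q t b) = Rx P (Ra t) (rho (Cod D t) b)"
  using dr by blast
lemma unit: "X \<in> Obj C \<Longrightarrow> a \<in> Car P X \<Longrightarrow> Le P X a (Rx P (eta X) (rho (Lo X) (lam X a)))"
  using un by blast
lemma counit: "Y \<in> Obj D \<Longrightarrow> b \<in> Car Q Y \<Longrightarrow> Le Q (Lo (Ro Y)) (lam (Ro Y) (rho Y b)) (Rx Q (eps Y) b)"
  using cu by blast

lemma rpC: "X \<in> Obj C \<Longrightarrow> c \<in> Car Q (Lo X) \<Longrightarrow> rp X c \<in> Car P X"
  unfolding rp_def using PRx[of "eta X" "rho (Lo X) c"] etaA rhoC LObj by auto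
lemma rpM: "X \<in> Obj C \<Longrightarrow> a \<in> Car Q (Lo X) \<Longrightarrow> b \<in> Car Q (Lo X) \<Longrightarrow> Le Q (Lo X) a b \<Longrightarrow> Le P X (rp X a) (rp X b)"
  unfolding rp_def using PRxm[of "eta X" "rho (Lo X) a" "rho (Lo X) b"] etaA rhoC rhoM LObj by auto
lemma rp_unit: "X \<in> Obj C \<Longrightarrow> a \<in> Car P X \<Longrightarrow> Le P X a (rp X (lam X a))"
  unfolding rp_def using unit by blast
lemma rp_counit: assumes X: "X \<in> Obj C" and c: "c \<in> Car Q (Lo X)"
  shows "Le Q (Lo X) (lam X (rp X c)) c"
proof -
  have e: "eta X \<in> Arr C" "Dom C (eta X) = X" "Cod C (eta X) = Ro (Lo X)" using etaA X by auto
  have LX: "Lo X \<in> Obj D" using LObj X .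
  have d: "rho (Lo X) c \<in> Car P (Ro (Lo X))" using rhoC LX c .
  have 1: "lam X (rp X c) = Rx Q (La (eta X)) (lam (Ro (Lo X)) (rho (Lo X) c))"
    unfolding rp_def using lamN[of "eta X" "rho (Lo X) c"] e d by simp
  have le: "Le Q (Lo (Ro (Lo X))) (lam (Ro (Lo X)) (rho (Lo X) c)) (Rx Q (eps (Lo X)) c)"
    using counit LX c .
  have ep: "eps (Lo X) \<in> Arr D" "Dom D (eps (Lo X)) = Lo (Ro (Lo X))" "Cod D (eps (Lo X)) = Lo X"
    using epsA LX by auto
  have le2: "Le Q (Lo X) (Rx Q (La (eta X)) (lam (Ro (Lo X)) (rho (Lo X) c))) (Rx Q (La (eta X)) (Rx Q (eps (Lo X)) c))"
    using QRxm[of "La (eta X)"] LArr[of "eta X"] e le lamC[OF RObj[OF LX] d] QRx[of "eps (Lo X)" c] ep c by auto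
  have "Rx Q (La (eta X)) (Rx Q (eps (Lo X)) c) = Rx Q (Cmp D (eps (Lo X)) (La (eta X))) c"
    using QCmp[of "La (eta X)" "eps (Lo X)" c] LArr[of "eta X"] e ep c by auto
  also have "\<dots> = c" using tri1 X QId LX c by simp
  finally show ?thesis using le2 1 by simp
qed

lemma lrl: "X \<in> Obj C \<Longrightarrow> a \<in> Car P X \<Longrightarrow> lam X (rp X (lam X a)) = lam X a"
  using Qantis[OF LObj] rp_counit lamC rpC lamM rp_unit by meson
lemma rlr: "X \<in> Obj C \<Longrightarrow> c \<in> Car Q (Lo X) \<Longrightarrow> rp X (lam X (rp X c)) = rp X c"
  using Pantis rp_counit lamC rpC rpM rp_unit by meson
lemma bxC: "X \<in> Obj C \<Longrightarrow> c \<in> Car Q (Lo X) \<Longrightarrow> bx X c \<in> Car Q (Lo X)"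
  unfolding bx_def using lamC rpC by blast
lemma bxM: "X \<in> Obj C \<Longrightarrow> a \<in> Car Q (Lo X) \<Longrightarrow> b \<in> Car Q (Lo X) \<Longrightarrow> Le Q (Lo X) a b \<Longrightarrow> Le Q (Lo X) (bx X a) (bx X b)"
  unfolding bx_def using lamM rpC rpM by blast
lemma bx_le: "X \<in> Obj C \<Longrightarrow> c \<in> Car Q (Lo X) \<Longrightarrow> Le Q (Lo X) (bx X c) c"
  unfolding bx_def using rp_counit by blast
lemma bx_idem: "X \<in> Obj C \<Longrightarrow> c \<in> Car Q (Lo X) \<Longrightarrow> bx X (bx X c) = bx X c"
  unfolding bx_def using lrl rpC by simp
lemma rp_bx: "X \<in> Obj C \<Longrightarrow> c \<in> Car Q (Lo X) \<Longrightarrow> rp X (bx X c) = rp X c"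
  unfolding bx_def using rlr by simp

lemma rpN: assumes t: "t \<in> Arr C" and c: "c \<in> Car Q (Lo (Cod C t))"
  shows "rp (Dom C t) (Rx Q (La t) c) = Rx P t (rp (Cod C t) c)"
proof -
  have Lt: "La t \<in> Arr D" "Dom D (La t) = Lo (Dom C t)" "Cod D (La t) = Lo (Cod C t)" using LArr t by auto
  have o: "Dom C t \<in> Obj C" "Cod C t \<in> Obj C" using DomC t by auto
  have 1: "rho (Lo (Dom C t)) (Rx Q (La t) c) = Rx P (Ra (La t)) (rho (Lo (Cod C t)) c)"
    using rhoN[of "La t" c] Lt c by simp
  have R: "Ra (La t) \<in> Arr C" "Dom C (Ra (La t)) = Ro (Lo (Dom C t))" "Cod C (Ra (La t)) = Ro (Lo (Cod C t))"
    using RArr Lt by auto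
  have e1: "eta (Dom C t) \<in> Arr C" "Dom C (eta (Dom C t)) = Dom C t" "Cod C (eta (Dom C t)) = Ro (Lo (Dom C t))"
    using etaA o by auto
  have e2: "eta (Cod C t) \<in> Arr C" "Dom C (eta (Cod C t)) = Cod C t" "Cod C (eta (Cod C t)) = Ro (Lo (Cod C t))"
    using etaA o by auto
  have d: "rho (Lo (Cod C t)) c \<in> Car P (Ro (Lo (Cod C t)))" using rhoC LObj o c by blast
  have "rp (Dom C t) (Rx Q (La t) c) = Rx P (eta (Dom C t)) (Rx P (Ra (La t)) (rho (Lo (Cod C t)) c))"
    unfolding rp_def 1 ..
  also have "\<dots> = Rx P (Cmp C (Ra (La t)) (eta (Dom C t))) (rho (Lo (Cod C t)) c)"
    using PCmp[of "eta (Dom C t)" "Ra (La t)"] R e1 d by simp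
  also have "\<dots> = Rx P (Cmp C (eta (Cod C t)) t) (rho (Lo (Cod C t)) c)" using etaN t by simp
  also have "\<dots> = Rx P t (rp (Cod C t) c)" unfolding rp_def
    using PCmp[of t "eta (Cod C t)"] e2 t d by simp
  finally show ?thesis .
qed

lemma bxN: assumes t: "t \<in> Arr C" and c: "c \<in> Car Q (Lo (Cod C t))"
  shows "bx (Dom C t) (Rx Q (La t) c) = Rx Q (La t) (bx (Cod C t) c)"
proof -
  have "rp (Cod C t) c \<in> Car P (Cod C t)" using rpC DomC t c by blast
  then show ?thesis unfolding bx_def rpN[OF t c] using lamN[OF t] by blast
qed

lemma QLArr: "t \<in> Arr C \<Longrightarrow> c \<in> Car Q (Lo (Cod C t)) \<Longrightarrow> Rx Q (La t) c \<in> Car Q (Lo (Dom C t))"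
  proof -
  assume t: "t \<in> Arr C" and c: "c \<in> Car Q (Lo (Cod C t))"
  have "La t \<in> Arr D" "Dom D (La t) = Lo (Dom C t)" "Cod D (La t) = Lo (Cod C t)" using LArr[OF t] by auto
  then show ?thesis using QRx[of "La t" c] c by simp
qed

lemma QRxmL: "t \<in> Arr C \<Longrightarrow> a \<in> Car Q (Lo (Cod C t)) \<Longrightarrow> b \<in> Car Q (Lo (Cod C t)) \<Longrightarrow> Le Q (Lo (Cod C t)) a b
   \<Longrightarrow> Le Q (Lo (Dom C t)) (Rx Q (La t) a) (Rx Q (La t) b)"
proof -
  assume t: "t \<in> Arr C" and r: "a \<in> Car Q (Lo (Cod C t))" "b \<in> Car Q (Lo (Cod C t))" "Le Q (Lo (Cod C t)) a b"
  have "La t \<in> Arr D" "Dom D (La t) = Lo (Dom C t)" "Cod D (La t) = Lo (Cod C t)" using LArr[OF t] by auto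
  then show ?thesis using QRxm[of "La t" a b] r by simp
qed
lemma QIdL: "X \<in> Obj C \<Longrightarrow> a \<in> Car Q (Lo X) \<Longrightarrow> Rx Q (La (Idm C X)) a = a"
  using LId QId LObj by simp
lemma QCmpL: assumes f: "f \<in> Arr C" and g: "g \<in> Arr C" and fg: "Cod C f = Dom C g" and a: "a \<in> Car Q (Lo (Cod C g))"
  shows "Rx Q (La (Cmp C g f)) a = Rx Q (La f) (Rx Q (La g) a)"
proof -
  have "La f \<in> Arr D" "Dom D (La f) = Lo (Dom C f)" "Cod D (La f) = Lo (Cod C f)" using LArr[OF f] by auto
  moreover have "La g \<in> Arr D" "Dom D (La g) = Lo (Dom C g)" "Cod D (La g) = Lo (Cod C g)" using LArr[OF g] by auto
  ultimately show ?thesis using LCmp[OF f g fg] QCmp[of "La f" "La g" a] fg a by simp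
qed

lemma docQL: "is_doctrine C (reidx Q Lo La)"
  apply (unfold is_doctrine_def reidx_def doctrine.simps, intro conjI ballI impI)
  subgoal by (rule Qrefl[OF LObj])
  subgoal by (rule Qantis[OF LObj])
  subgoal for X a b c by (rule Qtrans[OF LObj, of X a b c])
  subgoal by (rule QLArr)
  subgoal by (rule QRxmL)
  subgoal by (rule QIdL)
  subgoal by (rule QCmpL)
  done

lemma docB: "is_doctrine C (fixdoc Q Lo La bx)"
  apply (unfold is_doctrine_def fixdoc_def doctrine.simps, intro conjI ballI impI)
  subgoal using Qrefl[OF LObj] by blast
  subgoal using Qantis[OF LObj] by blast
  subgoal for X a b c using Qtrans[OF LObj, of X a b c] by blast
  subgoal for t a using QLArr[of t a] bxN[of t a] by auto
  subgoal using QRxmL by blast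
  subgoal using QIdL by blast
  subgoal using QCmpL by blast
  done

lemma reidx_id: "reidx X (\<lambda>X. X) (\<lambda>t. t) = X"
  unfolding reidx_def by simp

lemma cadj_id: "cat_adj C C (\<lambda>X. X) (\<lambda>t. t) (\<lambda>X. X) (\<lambda>t. t) (Idm C) (Idm C)"
proof -
  have F: "functor C C (\<lambda>X. X) (\<lambda>t. t)"
    unfolding functor_def hom_def by (intro conjI ballI impI; simp)
  show ?thesis unfolding cat_adj_def
    apply (intro conjI ballI impI F)
    subgoal for X using IdC[of X] unfolding hom_def by simp
    subgoal for t using CidC[of t] by simp
    subgoal for X using IdC[of X] unfolding hom_def by simp
    subgoal for t using CidC[of t] by simp
    subgoal for X using IdC[of X] CidC[of "Idm C X"] by simp
    subgoal for X using IdC[of X] CidC[of "Idm C X"] by simp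
    done
qed


lemma epsC: "Y \<in> Obj D \<Longrightarrow> b \<in> Car Q Y \<Longrightarrow> Rx Q (eps Y) b \<in> Car Q (Lo (Ro Y))"
  using QRx[of "eps Y" b] epsA[of Y] by simp

lemma epsQN: assumes s: "s \<in> Arr D" and b: "b \<in> Car Q (Cod D s)"
  shows "Rx Q (eps (Dom D s)) (Rx Q s b) = Rx Q (La (Ra s)) (Rx Q (eps (Cod D s)) b)"
proof -
  have o: "Dom D s \<in> Obj D" "Cod D s \<in> Obj D" using DomD s by auto
  have e1: "eps (Dom D s) \<in> Arr D" "Dom D (eps (Dom D s)) = Lo (Ro (Dom D s))" "Cod D (eps (Dom D s)) = Dom D s"
    using epsA o by auto
  have e2: "eps (Cod D s) \<in> Arr D" "Dom D (eps (Cod D s)) = Lo (Ro (Cod D s))" "Cod D (eps (Cod D s)) = Cod D s"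
    using epsA o by auto
  have R: "Ra s \<in> Arr C" "Dom C (Ra s) = Ro (Dom D s)" "Cod C (Ra s) = Ro (Cod D s)" using RArr s by auto
  have L: "La (Ra s) \<in> Arr D" "Dom D (La (Ra s)) = Lo (Ro (Dom D s))" "Cod D (La (Ra s)) = Lo (Ro (Cod D s))"
    using LArr R by auto
  have "Rx Q (eps (Dom D s)) (Rx Q s b) = Rx Q (Cmp D s (eps (Dom D s))) b"
    using QCmp[of "eps (Dom D s)" s b] e1 s b by simp
  also have "\<dots> = Rx Q (Cmp D (eps (Cod D s)) (La (Ra s))) b" using epsN s by simp
  also have "\<dots> = Rx Q (La (Ra s)) (Rx Q (eps (Cod D s)) b)"
    using QCmp[of "La (Ra s)" "eps (Cod D s)" b] e2 L b by simp
  finally show ?thesis .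
qed

lemma triQ: assumes X: "X \<in> Obj C" and a: "a \<in> Car Q (Lo X)"
  shows "Rx Q (La (eta X)) (Rx Q (eps (Lo X)) a) = a"
proof -
  have e: "eta X \<in> Arr C" "Dom C (eta X) = X" "Cod C (eta X) = Ro (Lo X)" using etaA X by auto
  have LX: "Lo X \<in> Obj D" using LObj X .
  have ep: "eps (Lo X) \<in> Arr D" "Dom D (eps (Lo X)) = Lo (Ro (Lo X))" "Cod D (eps (Lo X)) = Lo X"
    using epsA LX by auto
  have "Rx Q (La (eta X)) (Rx Q (eps (Lo X)) a) = Rx Q (Cmp D (eps (Lo X)) (La (eta X))) a"
    using QCmp[of "La (eta X)" "eps (Lo X)" a] LArr[of "eta X"] e ep a by auto
  also have "\<dots> = a" using tri1 X QId LX a by simp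
  finally show ?thesis .
qed

abbreviation "BQL \<equiv> fixdoc Q Lo La bx"
abbreviation "QL \<equiv> reidx Q Lo La"

lemma A1: "idx_adj C C P BQL (\<lambda>X. X) (\<lambda>t. t) lam (\<lambda>X. X) (\<lambda>t. t) rp (Idm C) (Idm C)"
  apply (unfold idx_adj_def reidx_id, intro conjI cadj_id dP docB)
  subgoal unfolding dnat_def fixdoc_def doctrine.simps
    apply (intro conjI ballI impI)
    subgoal for X a using lamC lrl unfolding bx_def by simp
    subgoal using lamM by blast
    subgoal using lamN by blast
    done
  subgoal unfolding dnat_def fixdoc_def doctrine.simps
    apply (intro conjI ballI impI)
    subgoal using rpC by blast
    subgoal using rpM by blast
    subgoal using rpN by blast
    done
  subgoal apply (intro ballI) subgoal for X a using rp_unit PId rpC lamC by simp done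
  subgoal unfolding fixdoc_def doctrine.simps apply (intro ballI)
    subgoal for X b using rp_counit[of X b] QIdL[of X b] by simp done
  done

lemma A2: "idx_adj C C P QL (\<lambda>X. X) (\<lambda>t. t) lam (\<lambda>X. X) (\<lambda>t. t) rp (Idm C) (Idm C)"
  apply (unfold idx_adj_def reidx_id, intro conjI cadj_id dP docQL)
  subgoal unfolding dnat_def reidx_def doctrine.simps
    apply (intro conjI ballI impI)
    subgoal using lamC by blast
    subgoal using lamM by blast
    subgoal using lamN by blast
    done
  subgoal unfolding dnat_def reidx_def doctrine.simps
    apply (intro conjI ballI impI)
    subgoal using rpC by blast
    subgoal using rpM by blast
    subgoal using rpN by blast
    done
  subgoal apply (intro ballI) subgoal for X a using rp_unit PId rpC lamC by simp done
  subgoal unfolding reidx_def doctrine.simps apply (intro ballI)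
    subgoal for X b using rp_counit[of X b] QIdL[of X b] by simp done
  done

lemma A3: "idx_adj C C BQL QL (\<lambda>X. X) (\<lambda>t. t) (\<lambda>X a. a) (\<lambda>X. X) (\<lambda>t. t) bx (Idm C) (Idm C)"
  apply (unfold idx_adj_def reidx_id, intro conjI cadj_id docB docQL)
  subgoal unfolding dnat_def reidx_def fixdoc_def doctrine.simps by simp
  subgoal unfolding dnat_def reidx_def fixdoc_def doctrine.simps
    apply (intro conjI ballI impI)
    subgoal using bxC bx_idem by simp
    subgoal using bxM by blast
    subgoal using bxN by blast
    done
  subgoal unfolding reidx_def fixdoc_def doctrine.simps apply (intro ballI)
    subgoal for X a using QIdL[of X a] Qrefl[OF LObj, of X a] by simp done
  subgoal unfolding reidx_def fixdoc_def doctrine.simps apply (intro ballI)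
    subgoal for X b using QIdL[of X b] bx_le[of X b] by simp done
  done

lemma A4: "idx_adj C D BQL Q Lo La (\<lambda>X a. a) Ro Ra (\<lambda>Y b. bx (Ro Y) (Rx Q (eps Y) b)) eta eps"
  apply (unfold idx_adj_def, intro conjI cadj docB dQ)
  subgoal unfolding dnat_def reidx_def fixdoc_def doctrine.simps by simp
  subgoal unfolding dnat_def reidx_def fixdoc_def doctrine.simps
    apply (intro conjI ballI impI)
    subgoal for Y b using bxC[OF RObj epsC] bx_idem[OF RObj epsC] by simp
    subgoal for Y a b using bxM[OF RObj epsC epsC] QRxm[of "eps Y" a b] epsA[of Y] epsC by simp
    subgoal for s b using epsQN[of s b] bxN[of "Ra s" "Rx Q (eps (Cod D s)) b"] RArr[of s] epsC[of "Cod D s" b] DomD[of s] by simp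
    done
  subgoal unfolding fixdoc_def doctrine.simps apply (intro ballI)
    subgoal for X a
    proof -
      assume X: "X \<in> Obj C" and a: "a \<in> {a \<in> Car Q (Lo X). bx X a = a}"
      have e: "eta X \<in> Arr C" "Dom C (eta X) = X" "Cod C (eta X) = Ro (Lo X)" using etaA X by auto
      have c: "Rx Q (eps (Lo X)) a \<in> Car Q (Lo (Ro (Lo X)))" using epsC LObj X a by blast
      have "Rx Q (La (eta X)) (bx (Ro (Lo X)) (Rx Q (eps (Lo X)) a)) = bx X (Rx Q (La (eta X)) (Rx Q (eps (Lo X)) a))"
        using bxN[of "eta X" "Rx Q (eps (Lo X)) a"] e c by simp
      also have "\<dots> = a" using triQ X a by simp
      finally show ?thesis using Qrefl[OF LObj[OF X]] a by simp
    qed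
    done
  subgoal unfolding fixdoc_def doctrine.simps apply (intro ballI)
    subgoal for Y b using bx_le[OF RObj epsC] by simp done
  done

lemma A5: "idx_adj C D QL Q Lo La (\<lambda>X a. a) Ro Ra (\<lambda>Y b. Rx Q (eps Y) b) eta eps"
  apply (unfold idx_adj_def, intro conjI cadj docQL dQ)
  subgoal unfolding dnat_def reidx_def doctrine.simps by simp
  subgoal unfolding dnat_def reidx_def doctrine.simps
    apply (intro conjI ballI impI)
    subgoal for Y b using epsC by simp
    subgoal for Y a b using QRxm[of "eps Y" a b] epsA[of Y] by simp
    subgoal for s b using epsQN[of s b] by simp
    done
  subgoal unfolding reidx_def doctrine.simps apply (intro ballI)
    subgoal for X a using triQ Qrefl[OF LObj] by simp done
  subgoal unfolding reidx_def doctrine.simps apply (intro ballI)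
    subgoal for Y b using Qrefl[OF LObj[OF RObj] epsC] by simp done
  done


lemma main:
    "idx_adj C C P BQL (\<lambda>X. X) (\<lambda>t. t) lam (\<lambda>X. X) (\<lambda>t. t) rp (Idm C) (Idm C)
   \<and> idx_adj C C P QL (\<lambda>X. X) (\<lambda>t. t) lam (\<lambda>X. X) (\<lambda>t. t) rp (Idm C) (Idm C)
   \<and> idx_adj C C BQL QL (\<lambda>X. X) (\<lambda>t. t) (\<lambda>X a. a) (\<lambda>X. X) (\<lambda>t. t) bx (Idm C) (Idm C)
   \<and> idx_adj C D BQL Q Lo La (\<lambda>X a. a) Ro Ra (\<lambda>Y b. bx (Ro Y) (Rx Q (eps Y) b)) eta eps
   \<and> idx_adj C D QL Q Lo La (\<lambda>X a. a) Ro Ra (\<lambda>Y b. Rx Q (eps Y) b) eta eps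
   \<and> arr_eq C P (comp1 Lo La (\<lambda>X a. a) (\<lambda>X. X) (\<lambda>t. t) lam) (comp1 Lo La (\<lambda>X a. a) (\<lambda>X. X) (\<lambda>t. t) lam)
   \<and> arr_eq C P (comp1 (\<lambda>X. X) (\<lambda>t. t) (\<lambda>X a. a) (\<lambda>X. X) (\<lambda>t. t) lam) ((\<lambda>X. X), (\<lambda>t. t), lam)
   \<and> arr_eq C BQL (comp1 Lo La (\<lambda>X a. a) (\<lambda>X. X) (\<lambda>t. t) (\<lambda>X a. a)) (Lo, La, (\<lambda>X a. a))
   \<and> arr_eq D Q (comp1 (\<lambda>X. X) (\<lambda>t. t) rp Ro Ra (\<lambda>Y b. bx (Ro Y) (Rx Q (eps Y) b))) (comp1 (\<lambda>X. X) (\<lambda>t. t) rp Ro Ra (\<lambda>Y b. Rx Q (eps Y) b))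
   \<and> arr_eq C QL (comp1 (\<lambda>X. X) (\<lambda>t. t) rp (\<lambda>X. X) (\<lambda>t. t) bx) ((\<lambda>X. X), (\<lambda>t. t), rp)
   \<and> arr_eq D Q (comp1 (\<lambda>X. X) (\<lambda>t. t) bx Ro Ra (\<lambda>Y b. Rx Q (eps Y) b)) (Ro, Ra, (\<lambda>Y b. bx (Ro Y) (Rx Q (eps Y) b)))
   \<and> (\<forall>X\<in>Obj C. \<forall>b\<in>Car BQL X. \<exists>a\<in>Car P X. lam X a = b)
   \<and> (\<forall>X\<in>Obj C. inj_on (rp X) (Car BQL X))"
  apply (intro conjI A1 A2 A3 A4 A5)
  subgoal unfolding arr_eq_def comp1_def by simp
  subgoal unfolding arr_eq_def comp1_def by simp
  subgoal unfolding arr_eq_def comp1_def by simp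
  subgoal unfolding arr_eq_def comp1_def using rp_bx[OF RObj epsC] by simp
  subgoal unfolding arr_eq_def comp1_def reidx_def using rp_bx by simp
  subgoal unfolding arr_eq_def comp1_def by simp
  subgoal unfolding fixdoc_def doctrine.simps
    apply (intro ballI)
    subgoal for X b using rpC[of X b] unfolding bx_def by auto
    done
  subgoal unfolding fixdoc_def doctrine.simps
    apply (intro ballI inj_onI)
    subgoal for X a b unfolding bx_def by (metis (mono_tags, lifting) mem_Collect_eq)
    done
  done

end

theorem theorem7p6:
  fixes C :: "('o1,'a1) cat" and D :: "('o2,'a2) cat"
    and P :: "('o1,'a1,'e1) doctrine" and Q :: "('o2,'a2,'e2) doctrine"
    and Lo :: "'o1 \<Rightarrow> 'o2" and La :: "'a1 \<Rightarrow> 'a2" and lam :: "'o1 \<Rightarrow> 'e1 \<Rightarrow> 'e2"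
    and Ro :: "'o2 \<Rightarrow> 'o1" and Ra :: "'a2 \<Rightarrow> 'a1" and rho :: "'o2 \<Rightarrow> 'e2 \<Rightarrow> 'e1"
    and eta :: "'o1 \<Rightarrow> 'a1" and eps :: "'o2 \<Rightarrow> 'a2"
  assumes "category C" and "category D"
    and "is_doctrine C P" and "is_doctrine D Q"
    and adj: "idx_adj C D P Q Lo La lam Ro Ra rho eta eps"
  defines "rho' \<equiv> (\<lambda>X a. Rx P (eta X) (rho (Lo X) a))"
    and "box \<equiv> (\<lambda>X a. lam X (Rx P (eta X) (rho (Lo X) a)))"
    and "QL \<equiv> reidx Q Lo La"
    and "BQL \<equiv> fixdoc Q Lo La (\<lambda>X a. lam X (Rx P (eta X) (rho (Lo X) a)))"
    and "iota \<equiv> (\<lambda>(X::'o1) (a::'e2). a)"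
    and "idQ \<equiv> (\<lambda>(X::'o1) (a::'e2). a)"
    and "rB \<equiv> (\<lambda>Y b. lam (Ro Y) (Rx P (eta (Ro Y)) (rho (Lo (Ro Y)) (Rx Q (eps Y) b))))"
    and "rQ \<equiv> (\<lambda>Y b. Rx Q (eps Y) b)"
  shows
    "idx_adj C C P BQL (\<lambda>X. X) (\<lambda>t. t) lam (\<lambda>X. X) (\<lambda>t. t) rho' (Idm C) (Idm C)
   \<and> idx_adj C C P QL (\<lambda>X. X) (\<lambda>t. t) lam (\<lambda>X. X) (\<lambda>t. t) rho' (Idm C) (Idm C)
   \<and> idx_adj C C BQL QL (\<lambda>X. X) (\<lambda>t. t) iota (\<lambda>X. X) (\<lambda>t. t) box (Idm C) (Idm C)
   \<and> idx_adj C D BQL Q Lo La iota Ro Ra rB eta eps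
   \<and> idx_adj C D QL Q Lo La idQ Ro Ra rQ eta eps
   \<and> arr_eq C P (comp1 Lo La iota (\<lambda>X. X) (\<lambda>t. t) lam) (comp1 Lo La idQ (\<lambda>X. X) (\<lambda>t. t) lam)
   \<and> arr_eq C P (comp1 (\<lambda>X. X) (\<lambda>t. t) iota (\<lambda>X. X) (\<lambda>t. t) lam) ((\<lambda>X. X), (\<lambda>t. t), lam)
   \<and> arr_eq C BQL (comp1 Lo La idQ (\<lambda>X. X) (\<lambda>t. t) iota) (Lo, La, iota)
   \<and> arr_eq D Q (comp1 (\<lambda>X. X) (\<lambda>t. t) rho' Ro Ra rB) (comp1 (\<lambda>X. X) (\<lambda>t. t) rho' Ro Ra rQ)
   \<and> arr_eq C QL (comp1 (\<lambda>X. X) (\<lambda>t. t) rho' (\<lambda>X. X) (\<lambda>t. t) box) ((\<lambda>X. X), (\<lambda>t. t), rho')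
   \<and> arr_eq D Q (comp1 (\<lambda>X. X) (\<lambda>t. t) box Ro Ra rQ) (Ro, Ra, rB)
   \<and> (\<forall>X\<in>Obj C. \<forall>b\<in>Car BQL X. \<exists>a\<in>Car P X. lam X a = b)
   \<and> (\<forall>X\<in>Obj C. inj_on (rho' X) (Car BQL X))"
proof -
  interpret A: adjs C D P Q Lo La lam Ro Ra rho eta eps
    by (unfold_locales; fact)
  have rpf: "A.rp = (\<lambda>X a. Rx P (eta X) (rho (Lo X) a))" by (intro ext) (simp add: A.rp_def)
  have bxf: "A.bx = (\<lambda>X a. lam X (Rx P (eta X) (rho (Lo X) a)))" by (intro ext) (simp add: A.bx_def A.rp_def)
  show ?thesis unfolding rho'_def box_def QL_def BQL_def iota_def idQ_def rB_def rQ_def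
    by (rule A.main[unfolded rpf bxf])
qed

end
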